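(* Suppose that for every $\alpha>0$ we have $pn^\alpha\to\infty$ as $n\to\infty$, and that $q\ln n\to\infty$, where $q=1-p$. Then for every $d\in\mathbb{N}$ and every $\varepsilon>0$ there exists $n_0$ such that for all $n\ge n_0$, $$u_d(n,p)\ge(2-\varepsilon)\log_{\frac{1}{1-p}}(np).$$
   Context: $G(n,p)$ is the Erdős–Rényi random graph on $n$ labelled vertices (vertex set $V$), each edge present independently with probability $p=p(n)$; $\mathbb{P}_{n,p}$ is the corresponding probability and $q=1-p$. A diameter graph in $\mathbb{R}^d$ is a graph $(V,E)$ with $V\subset\mathbb{R}^d$ finite and $E=\{\{\mathbf{x},\mathbf{y}\}\subseteq V: |\mathbf{x}-\mathbf{y}|=\operatorname{diam}V\}$, where $\operatorname{diam}V=\max_{\mathbf{x},\mathbf{y}\in V}|\mathbf{x}-\mathbf{y}|$ (Euclidean norm); a graph is a diameter graph in $\mathbb{R}^d$ if it is isomorphic to one. $u_d(n,p)$ is the largest positive integer $k$ such that $\mathbb{P}_{n,p}\big(\exists W\subseteq V,\ |W|=k,\ G[W]$ is a diameter graph in $\mathbb{R}^d$ and $\chi(G[W])=d+1\big)>\frac12$, where $G[W]$ is the induced subgraph; if no such $k$ exists, $u_d(n,p)=0$. *)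

theory Defs
  imports Complex_Main
begin

text \<open>Random graph G(n,p) on vertex set V = {0..<n}; a graph is given by its edge set,
  a set of 2-element subsets of V.\<close>

definition all_pairs :: "nat \<Rightarrow> nat set set" where
  "all_pairs n = {e. \<exists>i j. i < j \<and> j < n \<and> e = {i, j}}"

definition prob_gnp :: "nat \<Rightarrow> real \<Rightarrow> (nat set set \<Rightarrow> bool) \<Rightarrow> real" where
  "prob_gnp n p Q =
     (\<Sum>E \<in> {E. E \<subseteq> all_pairs n \<and> Q E}.
        p ^ card E * (1 - p) ^ (card (all_pairs n) - card E))"

text \<open>Points of R^d represented as functions nat \<Rightarrow> real vanishing from coordinate d on.\<close>
definition euclid :: "nat \<Rightarrow> (nat \<Rightarrow> real) set" where
  "euclid d = {x. \<forall>i\<ge>d. x i = 0}"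

definition edist :: "nat \<Rightarrow> (nat \<Rightarrow> real) \<Rightarrow> (nat \<Rightarrow> real) \<Rightarrow> real" where
  "edist d x y = sqrt (\<Sum>i<d. (x i - y i)^2)"

definition is_diameter_graph :: "nat \<Rightarrow> nat set \<Rightarrow> nat set set \<Rightarrow> bool" where
  "is_diameter_graph d W F \<longleftrightarrow> finite W \<and>
     (\<exists>f. inj_on f W \<and> f ` W \<subseteq> euclid d \<and>
        (\<forall>x\<in>W. \<forall>y\<in>W. x \<noteq> y \<longrightarrow>
           ({x, y} \<in> F \<longleftrightarrow>
              edist d (f x) (f y) = Max {edist d (f a) (f b) | a b. a \<in> W \<and> b \<in> W})))"

definition induced :: "nat set set \<Rightarrow> nat set \<Rightarrow> nat set set" where
  "induced E W = {e \<in> E. e \<subseteq> W}"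

definition chromatic_number :: "nat set \<Rightarrow> nat set set \<Rightarrow> nat" where
  "chromatic_number W F = (LEAST k. \<exists>c :: nat \<Rightarrow> nat. (\<forall>v\<in>W. c v < k) \<and>
       (\<forall>x\<in>W. \<forall>y\<in>W. x \<noteq> y \<longrightarrow> {x, y} \<in> F \<longrightarrow> c x \<noteq> c y))"

definition u_event :: "nat \<Rightarrow> nat \<Rightarrow> nat \<Rightarrow> nat set set \<Rightarrow> bool" where
  "u_event d n k E \<longleftrightarrow> (\<exists>W. W \<subseteq> {0..<n} \<and> card W = k \<and>
      is_diameter_graph d W (induced E W) \<and> chromatic_number W (induced E W) = d + 1)"

definition u :: "nat \<Rightarrow> nat \<Rightarrow> real \<Rightarrow> nat" where
  "u d n p = (let S = {k. 0 < k \<and> prob_gnp n p (u_event d n k) > 1/2}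
              in if S = {} then 0 else Max S)"

end

theory Submission
  imports Defs "HOL-Analysis.Convex"
begin



definition pairs :: "nat set \<Rightarrow> nat set set" where
  "pairs S = {e. e \<subseteq> S \<and> card e = 2}"

lemma mem_pairs: "{x,y} \<in> pairs S \<longleftrightarrow> x \<in> S \<and> y \<in> S \<and> x \<noteq> y"
  unfolding pairs_def by (cases "x = y") auto

lemma pairs_Int: "pairs A \<inter> pairs B = pairs (A \<inter> B)"
  unfolding pairs_def by auto

lemma pairs_mono: "A \<subseteq> B \<Longrightarrow> pairs A \<subseteq> pairs B"
  unfolding pairs_def by auto

lemma finite_pairs: "finite S \<Longrightarrow> finite (pairs S)"
  unfolding pairs_def by (rule finite_subset[of _ "Pow S"]) auto

lemma card_pairs: "finite S \<Longrightarrow> card (pairs S) = card S choose 2"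
  unfolding pairs_def by (rule n_subsets)

lemma pairsE: "e \<in> pairs S \<Longrightarrow> (\<And>x y. e = {x,y} \<Longrightarrow> x \<in> S \<Longrightarrow> y \<in> S \<Longrightarrow> x \<noteq> y \<Longrightarrow> P) \<Longrightarrow> P"
  unfolding pairs_def by (auto simp: card_2_iff)

lemma all_pairs_eq: "all_pairs n = pairs {0..<n}"
proof
  show "all_pairs n \<subseteq> pairs {0..<n}" unfolding all_pairs_def
    using mem_pairs by force
  show "pairs {0..<n} \<subseteq> all_pairs n"
  proof
    fix e assume "e \<in> pairs {0..<n}"
    then obtain x y where e: "e = {x,y}" "x < n" "y < n" "x \<noteq> y" by (auto elim: pairsE)
    show "e \<in> all_pairs n" unfolding all_pairs_def
    proof (cases "x < y")
      case True then show "e \<in> {e. \<exists>i j. i < j \<and> j < n \<and> e = {i, j}}" using e by auto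
    next
      case False then have "y < x" using e by auto
      then show "e \<in> {e. \<exists>i j. i < j \<and> j < n \<and> e = {i, j}}" using e by (auto simp: insert_commute)
    qed
  qed
qed

lemma prob_AB:
  fixes p :: real
  assumes p: "0 \<le> p" "p \<le> 1" and U: "finite U" and AB: "A \<subseteq> U" "B \<subseteq> U" "A \<inter> B = {}"
  shows "(\<Sum>E\<in>{E. E \<subseteq> U \<and> A \<subseteq> E \<and> B \<inter> E = {}}. p ^ card E * (1-p)^(card U - card E))
         = p ^ card A * (1-p) ^ card B"
proof -
  define f1 where "f1 e = (if e \<in> B then 0 else p)" for e
  define f2 where "f2 e = (if e \<in> A then 0 else 1 - p)" for e
  have fA: "finite A" "finite B" using AB(1,2) U by (auto intro: finite_subset)
  have "(\<Prod>e\<in>U. f1 e + f2 e) = (\<Prod>e\<in>A \<union> B. f1 e + f2 e)"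
    by (rule prod.mono_neutral_right) (use U AB in \<open>auto simp: f1_def f2_def\<close>)
  also have "\<dots> = (\<Prod>e\<in>A. f1 e + f2 e) * (\<Prod>e\<in>B. f1 e + f2 e)"
    by (rule prod.union_disjoint) (use fA AB in auto)
  also have "(\<Prod>e\<in>A. f1 e + f2 e) = (\<Prod>e\<in>A. p)"
    by (rule prod.cong) (use AB in \<open>auto simp: f1_def f2_def\<close>)
  also have "(\<Prod>e\<in>B. f1 e + f2 e) = (\<Prod>e\<in>B. 1 - p)"
    by (rule prod.cong) (use AB in \<open>auto simp: f1_def f2_def\<close>)
  finally have L: "(\<Prod>e\<in>U. f1 e + f2 e) = p ^ card A * (1-p) ^ card B" by simp
  have R: "(\<Prod>e\<in>U. f1 e + f2 e) = (\<Sum>X\<in>Pow U. (\<Prod>x\<in>X. f1 x) * (\<Prod>x\<in>U-X. f2 x))"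
    by (rule prod_add[OF U])
  have T: "(\<Prod>x\<in>X. f1 x) * (\<Prod>x\<in>U-X. f2 x) =
      (if A \<subseteq> X \<and> B \<inter> X = {} then p ^ card X * (1-p)^(card U - card X) else 0)"
    if X: "X \<in> Pow U" for X
  proof -
    have fX: "finite X" using X U finite_subset by auto
    show ?thesis
    proof (cases "A \<subseteq> X \<and> B \<inter> X = {}")
      case True
      have "(\<Prod>x\<in>X. f1 x) = (\<Prod>x\<in>X. p)" by (rule prod.cong) (use True in \<open>auto simp: f1_def\<close>)
      moreover have "(\<Prod>x\<in>U-X. f2 x) = (\<Prod>x\<in>U-X. 1-p)" by (rule prod.cong) (use True in \<open>auto simp: f2_def\<close>)
      moreover have "card (U - X) = card U - card X" using X fX by (simp add: card_Diff_subset)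
      ultimately show ?thesis using True by simp
    next
      case False
      then consider "\<exists>e\<in>A. e \<notin> X" | "\<exists>e\<in>B. e \<in> X" by blast
      then show ?thesis
      proof cases
        case 1 then obtain e where "e \<in> A" "e \<notin> X" by blast
        then have "e \<in> U - X" "f2 e = 0" using AB by (auto simp: f2_def)
        then have "(\<Prod>x\<in>U-X. f2 x) = 0" using U by (meson finite_Diff prod_zero)
        then show ?thesis unfolding if_not_P[OF False] by simp
      next
        case 2 then obtain e where "e \<in> B" "e \<in> X" by blast
        then have "(\<Prod>x\<in>X. f1 x) = 0" using fX by (meson prod_zero f1_def)
        then show ?thesis unfolding if_not_P[OF False] by simp
      qed
    qed
  qed
  have "(\<Sum>X\<in>Pow U. (\<Prod>x\<in>X. f1 x) * (\<Prod>x\<in>U-X. f2 x)) =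
        (\<Sum>X\<in>Pow U. if A \<subseteq> X \<and> B \<inter> X = {} then p ^ card X * (1-p)^(card U - card X) else 0)"
    by (rule sum.cong) (use T in auto)
  also have "\<dots> = (\<Sum>X\<in>{X\<in>Pow U. A \<subseteq> X \<and> B \<inter> X = {}}. p ^ card X * (1-p)^(card U - card X))"
    by (rule sum.inter_filter[symmetric]) (use U in auto)
  also have "{X\<in>Pow U. A \<subseteq> X \<and> B \<inter> X = {}} = {E. E \<subseteq> U \<and> A \<subseteq> E \<and> B \<inter> E = {}}" by auto
  finally show ?thesis using L R by simp
qed




lemma second_moment:
  fixes w :: "'e \<Rightarrow> real" and Q :: "'i \<Rightarrow> 'e \<Rightarrow> bool"
  assumes fO: "finite \<Omega>" and fP: "finite P" and w: "\<And>E. E \<in> \<Omega> \<Longrightarrow> w E \<ge> 0"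
  shows "(\<Sum>\<pi>\<in>P. \<Sum>E\<in>{E\<in>\<Omega>. Q \<pi> E}. w E)^2 \<le>
     (\<Sum>E\<in>{E\<in>\<Omega>. \<exists>\<pi>\<in>P. Q \<pi> E}. w E) *
     (\<Sum>\<pi>\<in>P. \<Sum>\<pi>'\<in>P. \<Sum>E\<in>{E\<in>\<Omega>. Q \<pi> E \<and> Q \<pi>' E}. w E)"
proof -
  define X where "X E = (\<Sum>\<pi>\<in>P. if Q \<pi> E then 1 else 0::real)" for E
  define \<Omega>' where "\<Omega>' = {E\<in>\<Omega>. \<exists>\<pi>\<in>P. Q \<pi> E}"
  have fO': "finite \<Omega>'" using fO by (simp add: \<Omega>'_def)
  have X0: "X E = 0" if "E \<notin> \<Omega>'" "E \<in> \<Omega>" for E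
    using that by (auto simp: X_def \<Omega>'_def intro!: sum.neutral)
  have 1: "(\<Sum>\<pi>\<in>P. \<Sum>E\<in>{E\<in>\<Omega>. Q \<pi> E}. w E) = (\<Sum>E\<in>\<Omega>. w E * X E)"
  proof -
    have "(\<Sum>\<pi>\<in>P. \<Sum>E\<in>{E\<in>\<Omega>. Q \<pi> E}. w E) = (\<Sum>\<pi>\<in>P. \<Sum>E\<in>\<Omega>. if Q \<pi> E then w E else 0)"
      by (rule sum.cong) (use fO in \<open>auto simp: sum.inter_filter\<close>)
    also have "\<dots> = (\<Sum>E\<in>\<Omega>. \<Sum>\<pi>\<in>P. if Q \<pi> E then w E else 0)" by (rule sum.swap)
    also have "\<dots> = (\<Sum>E\<in>\<Omega>. w E * X E)"
      by (rule sum.cong) (auto simp: X_def sum_distrib_left intro!: sum.cong)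
    finally show ?thesis .
  qed
  have 2: "(\<Sum>\<pi>\<in>P. \<Sum>\<pi>'\<in>P. \<Sum>E\<in>{E\<in>\<Omega>. Q \<pi> E \<and> Q \<pi>' E}. w E) = (\<Sum>E\<in>\<Omega>. w E * X E ^ 2)"
  proof -
    have "(\<Sum>\<pi>\<in>P. \<Sum>\<pi>'\<in>P. \<Sum>E\<in>{E\<in>\<Omega>. Q \<pi> E \<and> Q \<pi>' E}. w E) =
          (\<Sum>\<pi>\<in>P. \<Sum>\<pi>'\<in>P. \<Sum>E\<in>\<Omega>. if Q \<pi> E \<and> Q \<pi>' E then w E else 0)"
      using fO by (simp add: sum.inter_filter)
    also have "\<dots> = (\<Sum>\<pi>\<in>P. \<Sum>E\<in>\<Omega>. \<Sum>\<pi>'\<in>P. if Q \<pi> E \<and> Q \<pi>' E then w E else 0)"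
      by (intro sum.cong refl sum.swap)
    also have "\<dots> = (\<Sum>E\<in>\<Omega>. \<Sum>\<pi>\<in>P. \<Sum>\<pi>'\<in>P. if Q \<pi> E \<and> Q \<pi>' E then w E else 0)"
      by (rule sum.swap)
    also have "\<dots> = (\<Sum>E\<in>\<Omega>. w E * X E ^ 2)"
      by (rule sum.cong) (auto simp: X_def power2_eq_square sum_distrib_left sum_distrib_right intro!: sum.cong)
    finally show ?thesis .
  qed
  have 3: "(\<Sum>E\<in>\<Omega>. f E) = (\<Sum>E\<in>\<Omega>'. f E)" if "\<And>E. E \<in> \<Omega> \<Longrightarrow> E \<notin> \<Omega>' \<Longrightarrow> f E = 0" for f :: "'e \<Rightarrow> real"
    by (rule sum.mono_neutral_right) (use fO that in \<open>auto simp: \<Omega>'_def\<close>)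
  have "(\<Sum>E\<in>\<Omega>'. w E * X E)^2 = (\<Sum>E\<in>\<Omega>'. sqrt (w E) * (sqrt (w E) * X E))^2"
    by (intro arg_cong[where f="\<lambda>x. x^2"] sum.cong refl)
       (use w in \<open>auto simp: \<Omega>'_def real_sqrt_mult[symmetric]\<close>)
  also have "\<dots> \<le> (\<Sum>E\<in>\<Omega>'. (sqrt (w E))^2) * (\<Sum>E\<in>\<Omega>'. (sqrt (w E) * X E)^2)"
    by (rule Cauchy_Schwarz_ineq_sum)
  also have "\<dots> = (\<Sum>E\<in>\<Omega>'. w E) * (\<Sum>E\<in>\<Omega>'. w E * X E ^ 2)"
    by (intro arg_cong2[where f="(*)"] sum.cong refl)
       (use w in \<open>auto simp: \<Omega>'_def power_mult_distrib\<close>)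
  finally show ?thesis unfolding 1 2 using 3[of "\<lambda>E. w E * X E"] 3[of "\<lambda>E. w E * X E ^ 2"] X0
    by (simp add: \<Omega>'_def)
qed




definition D2 :: "nat \<Rightarrow> (nat \<Rightarrow> real) \<Rightarrow> (nat \<Rightarrow> real) \<Rightarrow> real" where
  "D2 d x y = (\<Sum>i<d. (x i - y i)^2)"

definition interp :: "real \<Rightarrow> (nat \<Rightarrow> real) \<Rightarrow> (nat \<Rightarrow> real) \<Rightarrow> nat \<Rightarrow> real" where
  "interp l a b = (\<lambda>k. l * a k + (1 - l) * b k)"

lemma D2_sym: "D2 d x y = D2 d y x"
  unfolding D2_def by (intro sum.cong refl) (simp add: power2_commute)

lemma D2_interp: "D2 d (interp l a b) c = l * D2 d a c + (1 - l) * D2 d b c - l * (1 - l) * D2 d a b"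
  unfolding D2_def interp_def
  by (simp add: sum_distrib_left sum_subtractf[symmetric] sum.distrib[symmetric])
     (intro sum.cong refl, simp add: power2_eq_square algebra_simps)

lemma D2_interp2: "D2 d (interp l a b) (interp m a b) = (l - m)^2 * D2 d a b"
  unfolding D2_def interp_def
  by (simp add: sum_distrib_left) (intro sum.cong refl, simp add: power2_eq_square algebra_simps)

definition tt :: "nat \<Rightarrow> real" where "tt d = (1 - sqrt (real d + 1)) / real d"

definition vtx :: "nat \<Rightarrow> nat \<Rightarrow> nat \<Rightarrow> real" where
  "vtx d i = (if i < d then (\<lambda>k. if k = i then 1 else 0) else (\<lambda>k. if k < d then tt d else 0))"

lemma tt_eq: "d \<ge> 1 \<Longrightarrow> real d * tt d ^ 2 - 2 * tt d - 1 = 0"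
proof -
  assume d: "d \<ge> 1"
  have s: "sqrt (real d + 1) ^ 2 = real d + 1" by simp
  have "real d * tt d ^ 2 - 2 * tt d - 1 = ((1 - sqrt (real d + 1))^2 - 2 * (1 - sqrt (real d + 1)) - real d) / real d"
    using d by (simp add: tt_def field_simps power2_eq_square)
  also have "(1 - sqrt (real d + 1))^2 - 2 * (1 - sqrt (real d + 1)) - real d = sqrt (real d + 1) ^ 2 - real d - 1"
    by (simp add: power2_eq_square algebra_simps)
  finally show ?thesis using s by simp
qed

lemma D2_vtx:
  assumes d: "d \<ge> 1" and ij: "i \<le> d" "j \<le> d" "i \<noteq> j"
  shows "D2 d (vtx d i) (vtx d j) = 2"
proof -
  have A: "D2 d (vtx d i) (vtx d j) = 2" if ij: "i < d" "j \<le> d" "i \<noteq> j" for i j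
  proof (cases "j < d")
    case True
    have "D2 d (vtx d i) (vtx d j) = (\<Sum>k<d. (if k = i then 1 else 0) + (if k = j then 1 else 0))"
      unfolding D2_def vtx_def using True ij by (intro sum.cong refl) auto
    also have "\<dots> = 2" using True ij by (simp add: sum.distrib)
    finally show ?thesis .
  next
    case False
    then have jd: "j = d" using ij by auto
    have "D2 d (vtx d i) (vtx d j) = (\<Sum>k<d. (if k = i then 1 - 2 * tt d else 0) + tt d ^ 2)"
      unfolding D2_def vtx_def using jd ij by (intro sum.cong refl) (auto simp: power2_eq_square algebra_simps)
    also have "\<dots> = 1 - 2 * tt d + real d * tt d ^ 2" using ij by (simp add: sum.distrib)
    also have "\<dots> = 2" using tt_eq[OF d] by linarith
    finally show ?thesis .
  qed
  show ?thesis
  proof (cases "i < d")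
    case True then show ?thesis using A ij by auto
  next
    case False
    then have "j < d" using ij by auto
    then show ?thesis using A[of j i] ij D2_sym by auto
  qed
qed

lemma vtx_euclid: "vtx d i \<in> euclid d"
  unfolding vtx_def euclid_def by auto

lemma interp_euclid: "a \<in> euclid d \<Longrightarrow> b \<in> euclid d \<Longrightarrow> interp l a b \<in> euclid d"
  unfolding interp_def euclid_def by auto

lemma edist_D2: "edist d x y = sqrt (D2 d x y)"
  unfolding edist_def D2_def ..




lemma aux_ineq:
  fixes l a b :: real
  assumes l: "0 < l" "l < 1" and a: "a = 0 \<or> a = 2" and b: "b = 0 \<or> b = 2" and ab: "\<not> (a = 0 \<and> b = 0)"
  shows "0 < l * a + (1 - l) * b - l * (1 - l) * 2 \<and> l * a + (1 - l) * b - l * (1 - l) * 2 < 2"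
proof -
  have p: "l * (1 - l) > 0" using l by simp
  have q1: "l * l < l" using l by (simp add: mult_less_cancel_left1)
  have q2: "(1-l) * (1-l) < 1 - l" using l by (simp add: mult_less_cancel_left1)
  have r: "l * (1-l) < 1 - l" using l by (simp add: mult_less_cancel_right1)
  have q3: "l * l < 1" using q1 l by linarith
  note q = q1 q2 q3
  consider "a = 0" "b = 2" | "a = 2" "b = 0" | "a = 2" "b = 2" using a b ab by blast
  then show ?thesis
  proof cases
    case 1 then show ?thesis using p q r l by (simp add: algebra_simps)
  next
    case 2 then show ?thesis using p q r l by (simp add: algebra_simps)
  next
    case 3 then show ?thesis using p q r l by (simp add: algebra_simps)
  qed
qed

lemma D2_self: "D2 d x x = 0" unfolding D2_def by simp

lemma D2_vtx0: "d \<ge> 1 \<Longrightarrow> i \<le> d \<Longrightarrow> j \<le> d \<Longrightarrow> D2 d (vtx d i) (vtx d j) = (if i = j then 0 else 2)"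
  using D2_vtx D2_self by auto

lemma diameter_witness:
  assumes d: "d \<ge> 1" and W: "finite W" and CW: "C \<subseteq> W" and cC: "card C = d + 1"
  shows "is_diameter_graph d W (pairs C)"
proof -
  have fC: "finite C" using W CW finite_subset by auto
  obtain g where g: "bij_betw g {0..<d+1} C" using ex_bij_betw_nat_finite[OF fC] cC by auto
  define m where "m = card (W - C)"
  obtain h where h: "bij_betw h {0..<m} (W - C)" using ex_bij_betw_nat_finite[of "W - C"] W m_def by auto
  define lam where "lam j = (real j + 1) / (real m + 1)" for j :: nat
  define ig where "ig = inv_into {0..<d+1} g"
  define ih where "ih = inv_into {0..<m} h"
  define f where "f x = (if x \<in> C then vtx d (ig x) else interp (lam (ih x)) (vtx d 0) (vtx d d))" for x
  have gs: "g ` {0..<d+1} = C" using g by (simp add: bij_betw_def)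
  have hs: "h ` {0..<m} = W - C" using h by (simp add: bij_betw_def)
  have ig0: "ig x \<in> {0..<d+1}" if "x \<in> C" for x
    unfolding ig_def using that gs by (intro inv_into_into) auto
  have ig1: "g (ig x) = x" if "x \<in> C" for x
    unfolding ig_def using that gs by (intro f_inv_into_f) auto
  have ih0: "ih x \<in> {0..<m}" if "x \<in> W - C" for x
    unfolding ih_def using that hs by (intro inv_into_into) auto
  have ih1: "h (ih x) = x" if "x \<in> W - C" for x
    unfolding ih_def using that hs by (intro f_inv_into_f) auto
  have ig: "ig x \<le> d" if "x \<in> C" for x using ig0[OF that] by simp
  have ig_inj: "ig x \<noteq> ig y" if "x \<in> C" "y \<in> C" "x \<noteq> y" for x y
    using that ig1 by metis
  have ih: "ih x < m" if "x \<in> W - C" for x using ih0[OF that] by simp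
  have ih_inj: "ih x \<noteq> ih y" if "x \<in> W - C" "y \<in> W - C" "x \<noteq> y" for x y
    using that ih1 by metis
  have lam: "0 < lam j \<and> lam j < 1" if "j < m" for j
    using that by (auto simp: lam_def field_simps)
  have lam_inj: "lam i \<noteq> lam j" if "i \<noteq> j" for i j
    using that by (auto simp: lam_def field_simps)
  have mixed: "0 < D2 d (f x) (f y) \<and> D2 d (f x) (f y) < 2" if xy: "x \<in> C" "y \<in> W - C" for x y
  proof -
    define l where "l = lam (ih y)"
    have l: "0 < l" "l < 1" using lam ih xy l_def by auto
    have "D2 d (f x) (f y) = D2 d (interp l (vtx d 0) (vtx d d)) (vtx d (ig x))"
      using xy by (simp add: f_def l_def D2_sym)
    also have "\<dots> = l * D2 d (vtx d 0) (vtx d (ig x)) + (1 - l) * D2 d (vtx d d) (vtx d (ig x)) - l * (1 - l) * 2"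
      using D2_interp D2_vtx[OF d, of 0 d] d by simp
    finally have e: "D2 d (f x) (f y) = \<dots>" .
    show ?thesis unfolding e
      by (rule aux_ineq[OF l]) (use ig[OF xy(1)] d in \<open>auto simp: D2_vtx0\<close>)
  qed
  have key: "0 < D2 d (f x) (f y) \<and> D2 d (f x) (f y) \<le> 2 \<and> (D2 d (f x) (f y) = 2 \<longleftrightarrow> x \<in> C \<and> y \<in> C)"
    if xy: "x \<in> W" "y \<in> W" "x \<noteq> y" for x y
  proof (cases "x \<in> C")
    case xC: True
    show ?thesis
    proof (cases "y \<in> C")
      case True
      then show ?thesis using xC ig ig_inj xy d by (simp add: f_def D2_vtx)
    next
      case False
      then show ?thesis using mixed[of x y] xC xy by auto
    qed
  next
    case xC: False
    show ?thesis
    proof (cases "y \<in> C")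
      case True
      then show ?thesis using mixed[of y x] xC xy D2_sym by auto
    next
      case False
      define l1 where "l1 = lam (ih x)"
      define l2 where "l2 = lam (ih y)"
      have l: "0 < l1" "l1 < 1" "0 < l2" "l2 < 1" "l1 \<noteq> l2"
        using lam ih ih_inj lam_inj xy xC False l1_def l2_def by auto
      have e: "D2 d (f x) (f y) = (l1 - l2)^2 * 2"
        using xC False D2_interp2 D2_vtx[OF d, of 0 d] d by (simp add: f_def l1_def l2_def)
      have "(l1 - l2)^2 > 0" using l by simp
      moreover have "(l1 - l2)^2 < 1"
      proof -
        have "\<bar>l1 - l2\<bar> < 1" using l by auto
        then have "\<bar>l1 - l2\<bar>^2 < 1" by (simp add: abs_square_less_1)
        then show ?thesis by simp
      qed
      ultimately show ?thesis unfolding e using xC by auto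
    qed
  qed
  have inj: "inj_on f W"
  proof (rule inj_onI)
    fix x y assume "x \<in> W" "y \<in> W" "f x = f y"
    then show "x = y" using key[of x y] D2_self by force
  qed
  have img: "f ` W \<subseteq> euclid d"
    unfolding f_def by (auto intro!: vtx_euclid interp_euclid)
  define M where "M = {edist d (f a) (f b) | a b. a \<in> W \<and> b \<in> W}"
  have MW: "M = (\<lambda>(a,b). edist d (f a) (f b)) ` (W \<times> W)" unfolding M_def by auto
  obtain x0 y0 where xy0: "x0 \<in> C" "y0 \<in> C" "x0 \<noteq> y0"
  proof -
    have "card C \<ge> 2" using cC d by simp
    then obtain S where "S \<subseteq> C" "card S = 2" using obtain_subset_with_card_n by metis
    then obtain a b where "S = {a,b}" "a \<noteq> b" by (auto simp: card_2_iff)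
    then show ?thesis using that \<open>S \<subseteq> C\<close> by auto
  qed
  have MaxM: "Max M = sqrt 2"
  proof (rule Max_eqI)
    show "finite M" unfolding MW using W by simp
    have "D2 d (f x0) (f y0) = 2" using xy0 CW key[of x0 y0] by auto
    moreover have "x0 \<in> W" "y0 \<in> W" using xy0 CW by auto
    ultimately show "sqrt 2 \<in> M" unfolding M_def edist_D2 by force
    fix z assume "z \<in> M"
    then obtain a b where z: "z = sqrt (D2 d (f a) (f b))" "a \<in> W" "b \<in> W" unfolding M_def edist_D2 by blast
    then show "z \<le> sqrt 2" using key[of a b] D2_self by (cases "a = b") auto
  qed
  show ?thesis unfolding is_diameter_graph_def
  proof (intro conjI exI[of _ f] W inj img ballI impI)
    fix x y assume xy: "x \<in> W" "y \<in> W" "x \<noteq> y"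
    have "edist d (f x) (f y) = Max {edist d (f a) (f b) |a b. a \<in> W \<and> b \<in> W} \<longleftrightarrow> D2 d (f x) (f y) = 2"
      using MaxM unfolding M_def edist_D2 by simp
    then show "({x, y} \<in> pairs C) = (edist d (f x) (f y) = Max {edist d (f a) (f b) |a b. a \<in> W \<and> b \<in> W})"
      using key[OF xy] xy by (simp add: mem_pairs)
  qed
qed

lemma chromatic_witness:
  assumes W: "finite W" and CW: "C \<subseteq> W" and cC: "card C = d + 1"
  shows "chromatic_number W (pairs C) = d + 1"
  unfolding chromatic_number_def
proof (rule Least_equality)
  have fC: "finite C" using W CW finite_subset by auto
  obtain g where g: "bij_betw g {0..<d+1} C" using ex_bij_betw_nat_finite[OF fC] cC by auto
  define c where "c x = (if x \<in> C then inv_into {0..<d+1} g x else 0)" for x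
  show "\<exists>c::nat\<Rightarrow>nat. (\<forall>v\<in>W. c v < d + 1) \<and> (\<forall>x\<in>W. \<forall>y\<in>W. x \<noteq> y \<longrightarrow> {x, y} \<in> pairs C \<longrightarrow> c x \<noteq> c y)"
  proof (intro exI[of _ c] conjI ballI impI)
    fix v assume "v \<in> W"
    have "inv_into {0..<d+1} g v \<in> {0..<d+1}" if "v \<in> C"
      using that g by (intro inv_into_into) (simp add: bij_betw_def)
    then show "c v < d + 1" unfolding c_def by auto
  next
    fix x y assume "x \<in> W" "y \<in> W" "x \<noteq> y" "{x,y} \<in> pairs C"
    then have "x \<in> C" "y \<in> C" by (auto simp: mem_pairs)
    moreover have "g (inv_into {0..<d+1} g z) = z" if "z \<in> C" for z
      using that g by (intro f_inv_into_f) (simp add: bij_betw_def)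
    ultimately show "c x \<noteq> c y" using \<open>x \<noteq> y\<close> unfolding c_def by metis
  qed
next
  fix k assume "\<exists>c::nat\<Rightarrow>nat. (\<forall>v\<in>W. c v < k) \<and> (\<forall>x\<in>W. \<forall>y\<in>W. x \<noteq> y \<longrightarrow> {x, y} \<in> pairs C \<longrightarrow> c x \<noteq> c y)"
  then obtain c :: "nat \<Rightarrow> nat" where c: "\<forall>v\<in>W. c v < k" "\<forall>x\<in>W. \<forall>y\<in>W. x \<noteq> y \<longrightarrow> {x, y} \<in> pairs C \<longrightarrow> c x \<noteq> c y"
    by blast
  have "inj_on c C" using c(2) CW by (auto simp: inj_on_def mem_pairs)
  moreover have "c ` C \<subseteq> {..<k}" using c(1) CW by auto
  ultimately have "card C \<le> card {..<k}" by (intro card_inj_on_le) auto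
  then show "d + 1 \<le> k" using cC by simp
qed




lemma binom_ratio:
  assumes "i \<le> k" "k \<le> n"
  shows "real (n choose (k - i)) \<le> real (n choose k) * (real k / real (n - k + 1))^i"
  using assms(1)
proof (induction i)
  case 0 then show ?case by simp
next
  case (Suc i)
  define r where "r = k - Suc i"
  have r: "Suc r = k - i" "r < n" "Suc r \<le> k" using Suc.prems assms(2) by (auto simp: r_def)
  have id: "(n choose Suc r) * Suc r = (n choose r) * (n - r)"
    by (metis binomial_absorb_comp binomial_absorption mult.commute)
  have nr: "real (n - r) > 0" using r by simp
  have "real (n choose r) = real (n choose Suc r) * (real (Suc r) / real (n - r))"
    using arg_cong[OF id, of real] nr by (simp add: field_simps)
  also have "\<dots> \<le> real (n choose Suc r) * (real k / real (n - k + 1))"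
  proof (rule mult_left_mono)
    have "real (Suc r) \<le> real k" using r by simp
    moreover have "real (n - k + 1) \<le> real (n - r)" using r by simp
    moreover have "real (n - k + 1) > 0" by simp
    ultimately show "real (Suc r) / real (n - r) \<le> real k / real (n - k + 1)"
      by (intro frac_le) auto
  qed simp
  also have "\<dots> \<le> real (n choose k) * (real k / real (n - k + 1))^i * (real k / real (n - k + 1))"
    using Suc r by (intro mult_right_mono) auto
  finally show ?case by (simp add: r_def mult_ac)
qed

lemma frac_bound:
  assumes "j \<le> k" "k \<le> n"
  shows "real (k choose j) * real ((n-k) choose (k-j)) \<le> real (n choose k) * (real k ^ 2 / real (n-k+1))^j"
proof -
  have "real (k choose j) \<le> real k ^ j" using binomial_le_pow[OF assms(1)] by (metis of_nat_le_iff of_nat_power)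
  moreover have "real ((n-k) choose (k-j)) \<le> real (n choose (k - j))"
    by (simp add: binomial_right_mono)
  ultimately have "real (k choose j) * real ((n-k) choose (k-j)) \<le> real k ^ j * real (n choose (k - j))"
    by (intro mult_mono) auto
  also have "\<dots> \<le> real k ^ j * (real (n choose k) * (real k / real (n - k + 1))^j)"
    by (intro mult_left_mono binom_ratio assms) auto
  also have "\<dots> = real (n choose k) * (real k ^ 2 / real (n-k+1))^j"
    by (simp add: power_divide power2_eq_square power_mult_distrib)
  finally show ?thesis .
qed

lemma count_inter:
  assumes W: "W \<subseteq> {0..<n}" "card W = k"
  shows "card {W'. W' \<subseteq> {0..<n} \<and> card W' = k \<and> card (W \<inter> W') = j}
         \<le> (k choose j) * ((n - k) choose (k - j))"
proof -
  define T where "T = {S. S \<subseteq> W \<and> card S = j} \<times> {S. S \<subseteq> {0..<n} - W \<and> card S = k - j}"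
  have fW: "finite W" using W finite_subset by auto
  have fT: "finite T" unfolding T_def using fW by auto
  have cT: "card T = (k choose j) * ((n - k) choose (k - j))"
    unfolding T_def card_cartesian_product using fW W
    by (simp add: n_subsets card_Diff_subset)
  have "card {W'. W' \<subseteq> {0..<n} \<and> card W' = k \<and> card (W \<inter> W') = j} \<le> card T"
  proof (rule card_inj_on_le[where f = "\<lambda>W'. (W \<inter> W', W' - W)"])
    show "inj_on (\<lambda>W'. (W \<inter> W', W' - W)) {W'. W' \<subseteq> {0..<n} \<and> card W' = k \<and> card (W \<inter> W') = j}"
      by (rule inj_onI) (metis Int_Diff_Un Int_commute prod.inject)
    show "(\<lambda>W'. (W \<inter> W', W' - W)) ` {W'. W' \<subseteq> {0..<n} \<and> card W' = k \<and> card (W \<inter> W') = j} \<subseteq> T"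
    proof
      fix z assume "z \<in> (\<lambda>W'. (W \<inter> W', W' - W)) ` {W'. W' \<subseteq> {0..<n} \<and> card W' = k \<and> card (W \<inter> W') = j}"
      then obtain W' where a: "W' \<subseteq> {0..<n}" "card W' = k" "card (W \<inter> W') = j" and z: "z = (W \<inter> W', W' - W)"
        by blast
      have "finite W'" using a finite_subset by auto
      then have "card (W' - W) = card W' - card (W' \<inter> W)" by (simp add: card_Diff_subset_Int)
      then have "card (W' - W) = k - j" using a by (simp add: Int_commute)
      then show "z \<in> T" unfolding T_def z using a by auto
    qed
  qed (rule fT)
  then show ?thesis using cT by simp
qed




definition Ks :: "nat \<Rightarrow> nat \<Rightarrow> nat set set" where
  "Ks n k = {W. W \<subseteq> {0..<n} \<and> card W = k}"

definition Pat :: "nat \<Rightarrow> nat \<Rightarrow> nat \<Rightarrow> (nat set \<times> nat set) set" where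
  "Pat n k d = Sigma (Ks n k) (\<lambda>W. {C. C \<subseteq> W \<and> card C = d + 1})"

definition pat :: "nat set \<times> nat set \<Rightarrow> nat set set \<Rightarrow> bool" where
  "pat \<pi> E \<longleftrightarrow> pairs (snd \<pi>) \<subseteq> E \<and> (pairs (fst \<pi>) - pairs (snd \<pi>)) \<inter> E = {}"

definition gg :: "real \<Rightarrow> nat \<Rightarrow> nat \<Rightarrow> real" where
  "gg p a j = (if j \<le> 1 then 1 else 1 / (p ^ a * (1 - p) ^ (j choose 2)))"

definition delta :: "nat \<Rightarrow> nat \<Rightarrow> real \<Rightarrow> nat \<Rightarrow> real" where
  "delta n k p d = (\<Sum>j\<in>{2..k}. real (k choose j) * real ((n-k) choose (k-j)) /
      (real (n choose k) * p ^ ((d+1) choose 2) * (1-p) ^ (j choose 2)))"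

lemma finite_Ks: "finite (Ks n k)"
  unfolding Ks_def by (rule finite_subset[of _ "Pow {0..<n}"]) auto

lemma card_Ks: "card (Ks n k) = n choose k"
  unfolding Ks_def using n_subsets[of "{0..<n}" k] by simp

lemma finite_Pat: "finite (Pat n k d)"
  unfolding Pat_def using finite_Ks
  by (intro finite_SigmaI) (auto simp: Ks_def intro: finite_subset[of _ "Pow _"])

lemma card_sub: "W \<in> Ks n k \<Longrightarrow> card {C. C \<subseteq> W \<and> card C = d + 1} = k choose (d+1)"
  unfolding Ks_def using n_subsets[of W "d+1"] finite_subset[of W "{0..<n}"] by auto

lemma pairsW_U: "W \<in> Ks n k \<Longrightarrow> pairs W \<subseteq> all_pairs n"
  unfolding Ks_def all_pairs_eq using pairs_mono by blast

lemma pat_prob: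
  fixes p :: real
  assumes p: "0 \<le> p" "p \<le> 1" and \<pi>: "\<pi> \<in> Pat n k d"
  shows "(\<Sum>E\<in>{E. E \<subseteq> all_pairs n \<and> pat \<pi> E}. p ^ card E * (1-p)^(card (all_pairs n) - card E))
        = p ^ ((d+1) choose 2) * (1-p) ^ ((k choose 2) - ((d+1) choose 2))"
proof -
  obtain W C where \<pi>': "\<pi> = (W, C)" "W \<in> Ks n k" "C \<subseteq> W" "card C = d + 1"
    using \<pi> unfolding Pat_def by auto
  have fW: "finite W" using \<pi>' unfolding Ks_def using finite_subset by auto
  have fC: "finite C" using fW \<pi>' finite_subset by auto
  have U: "finite (all_pairs n)" unfolding all_pairs_eq by (simp add: finite_pairs)
  have WU: "pairs W \<subseteq> all_pairs n" using pairsW_U \<pi>' by auto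
  have CW: "pairs C \<subseteq> pairs W" using \<pi>' pairs_mono by auto
  have "(\<Sum>E\<in>{E. E \<subseteq> all_pairs n \<and> pat \<pi> E}. p ^ card E * (1-p)^(card (all_pairs n) - card E))
     = p ^ card (pairs C) * (1-p) ^ card (pairs W - pairs C)"
    unfolding pat_def \<pi>' fst_conv snd_conv
    by (rule prob_AB[OF p U]) (use WU CW in auto)
  moreover have "card (pairs C) = (d+1) choose 2" using fC \<pi>' by (simp add: card_pairs)
  moreover have "card (pairs W - pairs C) = (k choose 2) - ((d+1) choose 2)"
    using CW fC fW \<pi>' by (simp add: card_Diff_subset finite_pairs card_pairs Ks_def)
  ultimately show ?thesis by simp
qed

lemma joint_bound:
  fixes p :: real
  assumes p: "0 < p" "p < 1" and \<pi>: "\<pi> \<in> Pat n k d" and \<pi>': "\<pi>' \<in> Pat n k d"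
  shows "(\<Sum>E\<in>{E. E \<subseteq> all_pairs n \<and> pat \<pi> E \<and> pat \<pi>' E}. p ^ card E * (1-p)^(card (all_pairs n) - card E))
        \<le> (p ^ ((d+1) choose 2) * (1-p) ^ ((k choose 2) - ((d+1) choose 2)))^2 * gg p ((d+1) choose 2) (card (fst \<pi> \<inter> fst \<pi>'))"
proof -
  obtain W C where \<pi>1: "\<pi> = (W, C)" "W \<in> Ks n k" "C \<subseteq> W" "card C = d + 1"
    using \<pi> unfolding Pat_def by auto
  obtain W' C' where \<pi>2: "\<pi>' = (W', C')" "W' \<in> Ks n k" "C' \<subseteq> W'" "card C' = d + 1"
    using \<pi>' unfolding Pat_def by auto
  define a where "a = (d+1) choose 2"
  define M where "M = (k choose 2) - a"
  define q where "q = 1 - p"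
  have q: "0 < q" "q \<le> 1" using p by (auto simp: q_def)
  define U where "U = all_pairs n"
  have fW: "finite W" "finite W'" using \<pi>1 \<pi>2 unfolding Ks_def using finite_subset by auto
  have fC: "finite C" "finite C'" using fW \<pi>1 \<pi>2 finite_subset by auto
  have fU: "finite U" unfolding U_def all_pairs_eq by (simp add: finite_pairs)
  have WU: "pairs W \<subseteq> U" "pairs W' \<subseteq> U" using pairsW_U \<pi>1 \<pi>2 by (auto simp: U_def)
  have CW: "pairs C \<subseteq> pairs W" "pairs C' \<subseteq> pairs W'" using \<pi>1 \<pi>2 pairs_mono by auto
  have fp: "finite (pairs W)" "finite (pairs W')" "finite (pairs C)" "finite (pairs C')"
    using fW fC by (auto simp: finite_pairs)
  have cC: "card (pairs C) = a" "card (pairs C') = a" using fC \<pi>1 \<pi>2 by (auto simp: card_pairs a_def)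
  have cW: "card (pairs W) = k choose 2" "card (pairs W') = k choose 2"
    using fW \<pi>1 \<pi>2 by (auto simp: card_pairs Ks_def)
  have cWC: "card (pairs W - pairs C) = M" "card (pairs W' - pairs C') = M"
    using CW fp cC cW by (auto simp: card_Diff_subset M_def)
  define A0 where "A0 = pairs C \<union> (pairs C' - pairs W)"
  define B0 where "B0 = (pairs W - pairs C) \<union> ((pairs W' - pairs C') - pairs W)"
  define s where "s = card (pairs C' \<inter> pairs W)"
  define t where "t = card ((pairs W' - pairs C') \<inter> pairs W)"
  define j where "j = card (W \<inter> W')"
  have st: "s + t = j choose 2"
  proof -
    have "pairs W' \<inter> pairs W = (pairs C' \<inter> pairs W) \<union> ((pairs W' - pairs C') \<inter> pairs W)" using CW by auto
    then have "card (pairs W' \<inter> pairs W) = s + t" unfolding s_def t_def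
      by (subst card_Un_disjoint[symmetric]) (use fp in auto)
    moreover have "pairs W' \<inter> pairs W = pairs (W \<inter> W')" using pairs_Int by blast
    moreover have "card (pairs (W \<inter> W')) = j choose 2" using fW by (simp add: card_pairs j_def)
    ultimately show ?thesis by simp
  qed
  have cA0: "card A0 = a + (a - s)"
  proof -
    have "card A0 = card (pairs C) + card (pairs C' - pairs W)" unfolding A0_def
      by (rule card_Un_disjoint) (use fp CW in auto)
    moreover have "card (pairs C' - pairs W) = a - s" unfolding s_def using fp cC
      by (simp add: card_Diff_subset_Int)
    ultimately show ?thesis using cC by simp
  qed
  have cB0: "card B0 = M + (M - t)"
  proof -
    have "card B0 = card (pairs W - pairs C) + card ((pairs W' - pairs C') - pairs W)" unfolding B0_def
      by (rule card_Un_disjoint) (use fp in auto)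
    moreover have "card ((pairs W' - pairs C') - pairs W) = M - t" unfolding t_def using fp cWC
      by (simp add: card_Diff_subset_Int)
    ultimately show ?thesis using cWC by simp
  qed
  have tM: "t \<le> M"
  proof -
    have "t \<le> card (pairs W' - pairs C')" unfolding t_def by (rule card_mono) (use fp in auto)
    then show ?thesis using cWC by simp
  qed
  have sub: "{E. E \<subseteq> U \<and> pat \<pi> E \<and> pat \<pi>' E} \<subseteq> {E. E \<subseteq> U \<and> A0 \<subseteq> E \<and> B0 \<inter> E = {}}"
    unfolding pat_def A0_def B0_def \<pi>1 \<pi>2 by auto
  have "(\<Sum>E\<in>{E. E \<subseteq> U \<and> pat \<pi> E \<and> pat \<pi>' E}. p ^ card E * q^(card U - card E))
     \<le> (\<Sum>E\<in>{E. E \<subseteq> U \<and> A0 \<subseteq> E \<and> B0 \<inter> E = {}}. p ^ card E * q^(card U - card E))"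
    by (rule sum_mono2) (use sub fU q p in \<open>auto intro: finite_subset[of _ "Pow U"]\<close>)
  also have "\<dots> = p ^ card A0 * q ^ card B0" unfolding q_def
    by (rule prob_AB) (use p fU WU CW in \<open>auto simp: A0_def B0_def\<close>)
  also have "\<dots> \<le> (p ^ a * q ^ M)^2 * gg p a j"
  proof (cases "j \<le> 1")
    case True
    have c0: "j choose 2 = 0" using True by (cases j) auto
    have "s = 0" "t = 0" using st unfolding c0 by auto
    then show ?thesis using True cA0 cB0 by (simp add: gg_def power_add power2_eq_square)
  next
    case False
    have 1: "p ^ card A0 \<le> p ^ a" unfolding cA0 using p by (intro power_decreasing) auto
    have 2: "q ^ card B0 * q ^ (j choose 2) \<le> q ^ M * q ^ M"
      unfolding cB0 power_add[symmetric] using q st tM by (intro power_decreasing) auto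
    have pos: "p ^ a > 0" "q ^ (j choose 2) > 0" using p q by auto
    have "p ^ card A0 * q ^ card B0 \<le> p ^ a * (q ^ M * q ^ M / q ^ (j choose 2))"
      using 1 2 pos q by (intro mult_mono) (auto simp: field_simps)
    also have "\<dots> = (p ^ a * q ^ M)^2 * gg p a j"
      using False pos by (simp add: gg_def q_def power2_eq_square field_simps)
    finally show ?thesis .
  qed
  finally show ?thesis unfolding U_def q_def a_def M_def j_def \<pi>1 \<pi>2 by simp
qed

lemma sum_gg:
  fixes p :: real
  assumes p: "0 < p" "p < 1" and W: "W \<in> Ks n k" and kn: "k \<le> n"
  shows "(\<Sum>\<pi>'\<in>Pat n k d. gg p ((d+1) choose 2) (card (W \<inter> fst \<pi>')))
         \<le> real (k choose (d+1)) * (real (n choose k) * (1 + delta n k p d))"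
proof -
  define a where "a = (d+1) choose 2"
  define q where "q = 1 - p"
  have q: "0 < q" "q \<le> 1" using p by (auto simp: q_def)
  define h where "h j = (if j \<le> 1 then 0 else 1 / (p ^ a * q ^ (j choose 2)))" for j
  have h0: "h j \<ge> 0" for j using p q by (auto simp: h_def)
  have ggh: "gg p a j \<le> 1 + h j" for j using p q by (auto simp: gg_def h_def q_def)
  have fsub: "\<forall>x\<in>Ks n k. finite {C. C \<subseteq> x \<and> card C = d + 1}"
    by (auto simp: Ks_def intro: finite_subset[of _ "Pow _"] finite_subset)
  have "(\<Sum>\<pi>'\<in>Pat n k d. gg p a (card (W \<inter> fst \<pi>')))
      = (\<Sum>W'\<in>Ks n k. \<Sum>C'\<in>{C. C \<subseteq> W' \<and> card C = d + 1}. gg p a (card (W \<inter> W')))"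
    unfolding Pat_def by (subst sum.Sigma[OF finite_Ks fsub]) (simp add: case_prod_beta)
  also have "\<dots> = (\<Sum>W'\<in>Ks n k. real (k choose (d+1)) * gg p a (card (W \<inter> W')))"
    by (rule sum.cong[OF refl]) (simp only: sum_constant card_sub)
  also have "\<dots> = real (k choose (d+1)) * (\<Sum>W'\<in>Ks n k. gg p a (card (W \<inter> W')))"
    by (simp add: sum_distrib_left)
  also have "(\<Sum>W'\<in>Ks n k. gg p a (card (W \<inter> W'))) \<le> (\<Sum>W'\<in>Ks n k. 1 + h (card (W \<inter> W')))"
    by (intro sum_mono ggh)
  also have "\<dots> = real (n choose k) + (\<Sum>W'\<in>Ks n k. h (card (W \<inter> W')))"
    by (simp add: sum.distrib card_Ks)
  also have "(\<Sum>W'\<in>Ks n k. h (card (W \<inter> W'))) =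
      (\<Sum>j\<in>{0..k}. \<Sum>W'\<in>{W'. W' \<in> Ks n k \<and> card (W \<inter> W') = j}. h (card (W \<inter> W')))"
  proof (rule sum.group[symmetric])
    show "finite (Ks n k)" by (rule finite_Ks)
    show "(\<lambda>W'. card (W \<inter> W')) ` Ks n k \<subseteq> {0..k}"
    proof clarsimp
      fix W' assume "W' \<in> Ks n k"
      have "card (W \<inter> W') \<le> card W" using W by (intro card_mono) (auto simp: Ks_def intro: finite_subset)
      then show "card (W \<inter> W') \<le> k" using W by (simp add: Ks_def)
    qed
  qed simp
  also have "\<dots> = (\<Sum>j\<in>{0..k}. real (card {W'. W' \<in> Ks n k \<and> card (W \<inter> W') = j}) * h j)"
    by (intro sum.cong refl) simp
  also have "\<dots> \<le> (\<Sum>j\<in>{0..k}. real ((k choose j) * ((n - k) choose (k - j))) * h j)"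
  proof (intro sum_mono mult_right_mono h0)
    fix j
    have "{W'. W' \<in> Ks n k \<and> card (W \<inter> W') = j} = {W'. W' \<subseteq> {0..<n} \<and> card W' = k \<and> card (W \<inter> W') = j}"
      by (auto simp: Ks_def)
    moreover have "card {W'. W' \<subseteq> {0..<n} \<and> card W' = k \<and> card (W \<inter> W') = j}
        \<le> (k choose j) * ((n - k) choose (k - j))"
      using count_inter[of W n k j] W unfolding Ks_def by blast
    ultimately show "real (card {W'. W' \<in> Ks n k \<and> card (W \<inter> W') = j}) \<le> real ((k choose j) * ((n - k) choose (k - j)))"
      by (simp only: of_nat_le_iff)
  qed
  also have "\<dots> = (\<Sum>j\<in>{2..k}. real ((k choose j) * ((n - k) choose (k - j))) * h j)"
    by (rule sum.mono_neutral_right) (auto simp: h_def)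
  also have "\<dots> = real (n choose k) * delta n k p d"
    unfolding delta_def sum_distrib_left
  proof (intro sum.cong refl)
    fix j assume "j \<in> {2..k}"
    moreover have "real (n choose k) > 0" using kn by simp
    ultimately show "real ((k choose j) * ((n - k) choose (k - j))) * h j =
      real (n choose k) * (real (k choose j) * real ((n - k) choose (k - j)) /
        (real (n choose k) * p ^ ((d + 1) choose 2) * (1 - p) ^ (j choose 2)))"
      by (simp add: h_def a_def q_def field_simps)
  qed
  finally show ?thesis unfolding a_def by (simp add: algebra_simps) (meson mult_right_mono of_nat_0_le_iff)
qed

lemma pat_u_event:
  assumes d: "d \<ge> 1" and \<pi>: "\<pi> \<in> Pat n k d" and E: "E \<subseteq> all_pairs n" and pe: "pat \<pi> E"
  shows "u_event d n k E"
proof -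
  obtain W C where \<pi>1: "\<pi> = (W, C)" "W \<subseteq> {0..<n}" "card W = k" "C \<subseteq> W" "card C = d + 1"
    using \<pi> unfolding Pat_def Ks_def by auto
  have fW: "finite W" using \<pi>1 finite_subset by auto
  have ind: "induced E W = pairs C"
  proof
    show "induced E W \<subseteq> pairs C"
    proof
      fix e assume e: "e \<in> induced E W"
      then have "e \<in> E" "e \<subseteq> W" by (auto simp: induced_def)
      then have "e \<in> pairs {0..<n}" using E all_pairs_eq by auto
      then have "e \<in> pairs W" using \<open>e \<subseteq> W\<close> by (simp add: pairs_def)
      then show "e \<in> pairs C" using pe \<open>e \<in> E\<close> unfolding pat_def \<pi>1 by auto
    qed
    show "pairs C \<subseteq> induced E W"
      using pe \<pi>1 unfolding pat_def induced_def pairs_def by auto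
  qed
  show ?thesis unfolding u_event_def
    using \<pi>1 ind diameter_witness[OF d fW \<pi>1(4,5)] chromatic_witness[OF fW \<pi>1(4,5)] by auto
qed

lemma delta_nonneg: "0 \<le> p \<Longrightarrow> p \<le> 1 \<Longrightarrow> delta n k p d \<ge> 0"
  unfolding delta_def by (intro sum_nonneg) auto

lemma card_Pat: "card (Pat n k d) = (n choose k) * (k choose (d+1))"
proof -
  have fsub: "\<forall>x\<in>Ks n k. finite {C. C \<subseteq> x \<and> card C = d + 1}"
    by (auto simp: Ks_def intro: finite_subset[of _ "Pow _"] finite_subset)
  have "card (Pat n k d) = (\<Sum>W\<in>Ks n k. card {C. C \<subseteq> W \<and> card C = d + 1})"
    unfolding Pat_def by (rule card_SigmaI[OF finite_Ks fsub])
  also have "\<dots> = (\<Sum>W\<in>Ks n k. k choose (d+1))"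
    by (rule sum.cong[OF refl]) (rule card_sub)
  finally show ?thesis by (simp add: card_Ks)
qed

lemma core:
  fixes p :: real
  assumes p: "0 < p" "p < 1" and d: "d \<ge> 1" and dk: "d + 1 \<le> k" and kn: "k \<le> n"
    and del: "delta n k p d < 1"
  shows "prob_gnp n p (u_event d n k) > 1/2"
proof -
  define U where "U = all_pairs n"
  define w where "w E = p ^ card E * (1-p)^(card U - card E)" for E :: "nat set set"
  define \<Omega> where "\<Omega> = {E. E \<subseteq> U}"
  define P1 where "P1 = p ^ ((d+1) choose 2) * (1-p) ^ ((k choose 2) - ((d+1) choose 2))"
  define N where "N = real (n choose k) * real (k choose (d+1))"
  define \<delta> where "\<delta> = delta n k p d"
  have fU: "finite U" unfolding U_def all_pairs_eq by (simp add: finite_pairs)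
  have fO: "finite \<Omega>" unfolding \<Omega>_def using fU by simp
  have w0: "w E \<ge> 0" for E using p by (simp add: w_def)
  have P1: "P1 > 0" using p by (simp add: P1_def)
  have N: "N > 0" using kn dk by (simp add: N_def)
  have d0: "\<delta> \<ge> 0" using p delta_nonneg \<delta>_def by auto
  have cP: "real (card (Pat n k d)) = N" by (simp add: card_Pat N_def)
  have E1: "(\<Sum>\<pi>\<in>Pat n k d. \<Sum>E\<in>{E\<in>\<Omega>. pat \<pi> E}. w E) = N * P1"
  proof -
    have "(\<Sum>\<pi>\<in>Pat n k d. \<Sum>E\<in>{E\<in>\<Omega>. pat \<pi> E}. w E) = (\<Sum>\<pi>\<in>Pat n k d. P1)"
      by (rule sum.cong[OF refl]) (use pat_prob[of p] p in \<open>simp add: \<Omega>_def w_def U_def P1_def\<close>)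
    then show ?thesis using cP by simp
  qed
  have E2: "(\<Sum>\<pi>\<in>Pat n k d. \<Sum>\<pi>'\<in>Pat n k d. \<Sum>E\<in>{E\<in>\<Omega>. pat \<pi> E \<and> pat \<pi>' E}. w E)
      \<le> N * N * P1^2 * (1 + \<delta>)"
  proof -
    have "(\<Sum>\<pi>\<in>Pat n k d. \<Sum>\<pi>'\<in>Pat n k d. \<Sum>E\<in>{E\<in>\<Omega>. pat \<pi> E \<and> pat \<pi>' E}. w E)
      \<le> (\<Sum>\<pi>\<in>Pat n k d. \<Sum>\<pi>'\<in>Pat n k d. P1^2 * gg p ((d+1) choose 2) (card (fst \<pi> \<inter> fst \<pi>')))"
    proof (intro sum_mono)
      fix \<pi> \<pi>' assume "\<pi> \<in> Pat n k d" "\<pi>' \<in> Pat n k d"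
      then show "(\<Sum>E\<in>{E\<in>\<Omega>. pat \<pi> E \<and> pat \<pi>' E}. w E) \<le> P1^2 * gg p ((d+1) choose 2) (card (fst \<pi> \<inter> fst \<pi>'))"
        using joint_bound[OF p, of \<pi> n k d \<pi>'] by (simp add: \<Omega>_def w_def U_def P1_def)
    qed
    also have "\<dots> = (\<Sum>\<pi>\<in>Pat n k d. P1^2 * (\<Sum>\<pi>'\<in>Pat n k d. gg p ((d+1) choose 2) (card (fst \<pi> \<inter> fst \<pi>'))))"
      by (simp add: sum_distrib_left)
    also have "\<dots> \<le> (\<Sum>\<pi>\<in>Pat n k d. P1^2 * (real (k choose (d+1)) * (real (n choose k) * (1 + \<delta>))))"
    proof (intro sum_mono mult_left_mono)
      fix \<pi> assume "\<pi> \<in> Pat n k d"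
      then have "fst \<pi> \<in> Ks n k" unfolding Pat_def by auto
      then show "(\<Sum>\<pi>'\<in>Pat n k d. gg p ((d+1) choose 2) (card (fst \<pi> \<inter> fst \<pi>')))
          \<le> real (k choose (d+1)) * (real (n choose k) * (1 + \<delta>))"
        unfolding \<delta>_def by (rule sum_gg[OF p _ kn])
    qed simp
    also have "\<dots> = N * N * P1^2 * (1 + \<delta>)"
      using cP by (simp add: N_def algebra_simps)
    finally show ?thesis .
  qed
  define Pe where "Pe = (\<Sum>E\<in>{E\<in>\<Omega>. \<exists>\<pi>\<in>Pat n k d. pat \<pi> E}. w E)"
  have SM: "(N * P1)^2 \<le> Pe * (N * N * P1^2 * (1 + \<delta>))"
  proof -
    have "(N * P1)^2 \<le> Pe * (\<Sum>\<pi>\<in>Pat n k d. \<Sum>\<pi>'\<in>Pat n k d. \<Sum>E\<in>{E\<in>\<Omega>. pat \<pi> E \<and> pat \<pi>' E}. w E)"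
      unfolding Pe_def E1[symmetric] by (rule second_moment[OF fO finite_Pat w0])
    also have "\<dots> \<le> Pe * (N * N * P1^2 * (1 + \<delta>))"
      by (rule mult_left_mono[OF E2]) (simp add: Pe_def sum_nonneg w0)
    finally show ?thesis .
  qed
  have pos: "N * N * P1^2 > 0" using N P1 by simp
  have "1 \<le> Pe * (1 + \<delta>)"
  proof -
    have eq: "(N * P1)^2 = N * N * P1^2" by (simp add: power2_eq_square)
    have "N * N * P1^2 * 1 \<le> N * N * P1^2 * (Pe * (1 + \<delta>))" using SM unfolding eq by (simp add: mult_ac)
    then show ?thesis using pos by (simp only: mult_le_cancel_left_pos)
  qed
  then have Pe: "Pe > 1/2" using del d0 \<delta>_def
    by (smt (verit, ccfv_threshold) mult_less_cancel_left mult_le_cancel_left2 divide_less_eq)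
  have "Pe \<le> (\<Sum>E\<in>{E. E \<subseteq> all_pairs n \<and> u_event d n k E}. w E)"
    unfolding Pe_def
  proof (rule sum_mono2)
    show "finite {E. E \<subseteq> all_pairs n \<and> u_event d n k E}" using fU by (simp add: U_def)
    show "{E \<in> \<Omega>. \<exists>\<pi>\<in>Pat n k d. pat \<pi> E} \<subseteq> {E. E \<subseteq> all_pairs n \<and> u_event d n k E}"
      using pat_u_event[OF d] by (auto simp: \<Omega>_def U_def)
  qed (use w0 in \<open>simp add: w_def U_def\<close>)
  also have "\<dots> = prob_gnp n p (u_event d n k)" unfolding prob_gnp_def w_def U_def ..
  finally show ?thesis using Pe by simp
qed




lemma choose2_real: "real (j choose 2) = real j * (real j - 1) / 2"
proof (induction j)
  case 0 then show ?case by simp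
next
  case (Suc j)
  have "Suc j choose 2 = j + (j choose 2)"
    by (simp add: numeral_2_eq_2 choose_reduce_nat)
  then show ?case using Suc by (simp add: field_simps)
qed

lemma qpow_bound:
  fixes q :: real
  assumes q: "0 < q" "q \<le> 1" and j: "1 \<le> j" "j \<le> k"
  shows "(1/q) ^ (j choose 2) \<le> ((1/q) powr ((real k - 1)/2)) ^ j"
proof -
  have b: "1 \<le> 1/q" using q by simp
  have "(1/q) ^ (j choose 2) = (1/q) powr (real (j choose 2))"
    using q by (simp add: powr_realpow)
  also have "\<dots> \<le> (1/q) powr (real j * ((real k - 1)/2))"
  proof (rule powr_mono[OF _ b])
    have "real j * (real j - 1) \<le> real j * (real k - 1)" using j by (intro mult_left_mono) auto
    then show "real (j choose 2) \<le> real j * ((real k - 1) / 2)" by (simp add: choose2_real)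
  qed
  also have "\<dots> = ((1/q) powr ((real k - 1)/2)) ^ j"
    using q by (simp add: powr_power)
  finally show ?thesis .
qed

lemma delta_bound:
  fixes p :: real
  assumes p: "0 < p" "p < 1" and k: "2 \<le> k" "k \<le> n"
    and rho: "real k ^ 2 / real (n - k + 1) * (1/(1-p)) powr ((real k - 1)/2) \<le> 1"
  shows "delta n k p d \<le> real k * (real k ^ 2 / real (n - k + 1) * (1/(1-p)) powr ((real k - 1)/2))^2
            / p ^ ((d+1) choose 2)"
proof -
  define q where "q = 1 - p"
  have q: "0 < q" "q \<le> 1" using p by (auto simp: q_def)
  define a where "a = (d+1) choose 2"
  define r where "r = real k ^ 2 / real (n - k + 1)"
  define B where "B = (1/q) powr ((real k - 1)/2)"
  have r0: "r \<ge> 0" by (simp add: r_def)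
  have B0: "B \<ge> 0" by (simp add: B_def)
  have rB: "r * B \<le> 1" using rho by (simp add: r_def B_def q_def)
  have pa: "p ^ a > 0" using p by simp
  have cnk: "real (n choose k) > 0" using k by simp
  have trm: "real (k choose j) * real ((n-k) choose (k-j)) / (real (n choose k) * p ^ a * q ^ (j choose 2))
      \<le> (r * B)^2 / p ^ a" if j: "j \<in> {2..k}" for j
  proof -
    have "real (k choose j) * real ((n-k) choose (k-j)) / (real (n choose k) * p ^ a * q ^ (j choose 2))
        = (real (k choose j) * real ((n-k) choose (k-j)) / real (n choose k)) * (1/q) ^ (j choose 2) / p ^ a"
      using q pa cnk by (simp add: field_simps power_one_over)
    also have "\<dots> \<le> r ^ j * B ^ j / p ^ a"
    proof (intro divide_right_mono mult_mono)
      show "real (k choose j) * real ((n-k) choose (k-j)) / real (n choose k) \<le> r ^ j"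
        using frac_bound[of j k n] j k cnk by (simp add: r_def divide_le_eq mult.commute)
      show "(1/q) ^ (j choose 2) \<le> B ^ j" unfolding B_def using qpow_bound[OF q, of j k] j by auto
    qed (use r0 B0 pa q in auto)
    also have "\<dots> = (r * B) ^ j / p ^ a" by (simp add: power_mult_distrib)
    also have "\<dots> \<le> (r * B) ^ 2 / p ^ a"
      using j rB r0 B0 pa by (intro divide_right_mono power_decreasing) auto
    finally show ?thesis .
  qed
  have "delta n k p d \<le> (\<Sum>j\<in>{2..k}. (r * B)^2 / p ^ a)"
    unfolding delta_def using trm by (intro sum_mono) (simp add: a_def q_def)
  also have "\<dots> = real (k - 1) * ((r * B)^2 / p ^ a)" using k by simp
  also have "\<dots> \<le> real k * ((r * B)^2 / p ^ a)"
    using pa by (intro mult_right_mono) auto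
  finally show ?thesis by (simp add: r_def B_def q_def a_def)
qed

lemma u_ge:
  assumes "0 < k" "prob_gnp n p (u_event d n k) > 1/2"
  shows "k \<le> u d n p"
proof -
  define S where "S = {k. 0 < k \<and> prob_gnp n p (u_event d n k) > 1/2}"
  have "S \<subseteq> {..n}"
  proof
    fix k' assume k': "k' \<in> S"
    show "k' \<in> {..n}"
    proof (rule ccontr)
      assume "k' \<notin> {..n}"
      then have "\<not> u_event d n k' E" for E
        unfolding u_event_def using card_mono[of "{0..<n}"] by force
      then have "prob_gnp n p (u_event d n k') = 0" unfolding prob_gnp_def by simp
      then show False using k' by (simp add: S_def)
    qed
  qed
  then have fS: "finite S" using finite_subset by blast
  have "k \<in> S" using assms by (simp add: S_def)
  then have "S \<noteq> {}" "k \<le> Max S" using fS by auto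
  then show ?thesis unfolding u_def S_def[symmetric] Let_def by simp
qed




lemma pointwise:
  fixes p \<epsilon> x :: real and n d :: nat
  defines "x \<equiv> real n"
  defines "a \<equiv> (d+1) choose 2"
  defines "\<beta> \<equiv> \<epsilon> / (2 * (real a + 10))"
  defines "c \<equiv> 3 / \<beta>"
  assumes eps: "0 < \<epsilon>" "\<epsilon> \<le> 1" and d: "d \<ge> 1"
    and p1: "p \<le> 1" and H2a: "p * x powr \<beta> \<ge> 1" and H2b: "(1 - p) * ln x \<ge> 1"
    and H3: "ln x \<ge> 16 * (real d + 1)^2"
    and H4: "2 * c \<le> x powr (1 - 2 * \<beta>)"
    and H5: "2 * c^2 \<le> x powr (\<epsilon>/2 - 4 * \<beta>)"
    and H6: "4 * c^5 < x powr (\<epsilon>/2)"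
  shows "real (u d n p) \<ge> (2 - \<epsilon>) * log (1 / (1 - p)) (x * p) \<and> log (1 / (1 - p)) (x * p) \<ge> 0"
proof -
  have beta: "0 < \<beta>" "\<beta> \<le> \<epsilon> / 20" using eps by (auto simp: \<beta>_def field_simps)
  have beta1: "\<beta> \<le> 1/20" using beta eps by simp
  have lnx: "ln x > 0"
    using H2b by (smt (verit, best) mult_nonneg_nonpos p1)
  have x1: "x > 1"
  proof -
    have "x \<ge> 0" by (simp add: x_def)
    moreover have "x \<noteq> 0" using lnx by auto
    ultimately have "x > 0" by simp
    then show ?thesis using lnx ln_gt_zero_iff by blast
  qed
  have x0: "x > 0" using x1 by simp
  have xb: "x powr \<beta> > 0" using x0 by simp
  have p0: "p > 0"
  proof (rule ccontr)
    assume "\<not> p > 0" then have "p * x powr \<beta> \<le> 0" using xb by (simp add: mult_nonpos_nonneg)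
    then show False using H2a by simp
  qed
  define q where "q = 1 - p"
  have qlb: "q \<ge> 1 / ln x" using H2b lnx by (simp add: q_def field_simps)
  have "1 / ln x > 0" using lnx by simp
  then have q0: "q > 0" using qlb by linarith
  have p1': "p < 1" using q0 by (simp add: q_def)
  define b where "b = 1 / q"
  have b1: "b > 1" using q0 p0 by (simp add: b_def q_def)
  have blx: "b \<le> ln x" using qlb q0 lnx by (simp add: b_def field_simps)
  have invp: "1 / p \<le> x powr \<beta>" using H2a p0 by (simp add: field_simps)
  have np_ge: "x * p \<ge> x powr (1/2)"
  proof -
    have "x powr (1/2) = x powr (1 - \<beta>) * x powr (\<beta> - 1/2)" by (simp add: powr_add[symmetric])
    also have "\<dots> \<le> x powr (1 - \<beta>) * 1"
      using x1 beta1 powr_mono[of "\<beta> - 1/2" 0 x] by (intro mult_left_mono) auto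
    also have "x powr (1 - \<beta>) = x / x powr \<beta>" using x0 by (simp add: powr_diff)
    also have "\<dots> \<le> x * p" using invp x0 xb p0 by (simp add: field_simps)
    finally show ?thesis by simp
  qed
  have np1: "x * p \<ge> 1" using np_ge ge_one_powr_ge_zero[of x "1/2"] x1 by linarith
  have npx: "x * p \<le> x" using p1 x0 by (simp add: mult_left_le)
  have lnb0: "ln b > 0" using b1 by simp
  have lnb_p: "ln b \<ge> p"
    using ln_one_minus_pos_upper_bound[of p] p0 p1' by (simp add: b_def q_def ln_div)
  define L where "L = log b (x * p)"
  have L_eq: "L = ln (x * p) / ln b" by (simp add: L_def log_def)
  have L0: "L \<ge> 0" using np1 lnb0 by (simp add: L_eq)
  have Lpow: "b powr L = x * p" using b1 np1 by (simp add: L_def)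
  have L_lb: "L \<ge> real d + 1"
  proof -
    have ln_np: "ln (x * p) \<ge> ln x / 2"
    proof -
      have "ln (x powr (1/2)) \<le> ln (x * p)"
        by (rule ln_le_cancel_iff[THEN iffD2]) (use np_ge x0 p0 in auto)
      moreover have "ln (x powr (1/2)) = ln x / 2" using x0 by (simp add: ln_powr)
      ultimately show ?thesis by linarith
    qed
    have "ln b \<le> ln (ln x)" using blx b1 by simp
    also have "ln (ln x) \<le> (ln x) powr (1/2) / (1/2)"
    proof -
      have "(real d + 1)^2 \<ge> 1" using d by simp
      then have "ln x \<ge> 1" using H3 by linarith
      then show ?thesis using ln_powr_bound[of "ln x" "1/2"] by simp
    qed
    finally have lnb_up: "ln b \<le> 2 * sqrt (ln x)" using lnx by (simp add: powr_half_sqrt)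
    have sq: "sqrt (ln x) \<ge> 4 * (real d + 1)"
    proof -
      have "sqrt (16 * (real d + 1)^2) \<le> sqrt (ln x)" using H3 by simp
      moreover have "sqrt (16 * (real d + 1)^2) = 4 * (real d + 1)" by (simp add: real_sqrt_mult)
      ultimately show ?thesis by simp
    qed
    have "L \<ge> (ln x / 2) / (2 * sqrt (ln x))"
      unfolding L_eq using ln_np lnb_up lnb0 lnx
      by (intro frac_le) auto
    also have "(ln x / 2) / (2 * sqrt (ln x)) = sqrt (ln x) / 4"
      using lnx by (simp add: field_simps)
    finally show ?thesis using sq by simp
  qed
  have L_ub: "L \<le> x powr (2 * \<beta>) / \<beta>"
  proof -
    have "ln (x * p) \<le> ln x" using npx np1 by simp
    then have "L \<le> ln x / p" unfolding L_eq using lnb_p p0 lnx np1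
      by (intro frac_le) auto
    also have "\<dots> = ln x * (1 / p)" by simp
    also have "\<dots> \<le> (x powr \<beta> / \<beta>) * x powr \<beta>"
      using ln_powr_bound[of x \<beta>] x1 beta invp lnx p0 by (intro mult_mono) auto
    also have "\<dots> = x powr (2 * \<beta>) / \<beta>" by (simp add: powr_add[symmetric])
    finally show ?thesis .
  qed
  define k where "k = nat \<lceil>(2 - \<epsilon>) * L\<rceil>"
  have kL: "real k \<ge> (2 - \<epsilon>) * L" "real k < (2 - \<epsilon>) * L + 1"
    using L0 eps ceiling_correct[of "(2 - \<epsilon>) * L"] by (auto simp: k_def)
  have kd: "k \<ge> d + 1"
  proof -
    have "(2 - \<epsilon>) * L \<ge> L" using L0 eps using mult_left_mono[of \<epsilon> 1 L] by (simp add: algebra_simps)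
    then have "real k \<ge> real d + 1" using kL L_lb by linarith
    then show ?thesis by linarith
  qed
  have k2: "k \<ge> 2" using kd d by simp
  have xb2: "x powr (2 * \<beta>) \<ge> 1" using x1 beta by (simp add: ge_one_powr_ge_zero)
  have kc: "real k \<le> c * x powr (2 * \<beta>)"
  proof -
    have "(2 - \<epsilon>) * L \<le> 2 * L" using L0 eps by (simp add: mult_right_mono)
    then have "real k \<le> 2 * (x powr (2 * \<beta>) / \<beta>) + 1" using kL L_ub by linarith
    also have "\<dots> \<le> 3 * (x powr (2 * \<beta>) / \<beta>)"
    proof -
      have "x powr (2 * \<beta>) / \<beta> \<ge> 1" using xb2 beta beta1 by (simp add: field_simps)
      then show ?thesis by simp
    qed
    finally show ?thesis by (simp add: c_def)
  qed
  have kx: "2 * real k \<le> x"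
  proof -
    have "2 * real k \<le> 2 * c * x powr (2 * \<beta>)" using kc by simp
    also have "\<dots> \<le> x powr (1 - 2 * \<beta>) * x powr (2 * \<beta>)"
      using H4 by (intro mult_right_mono) auto
    also have "\<dots> = x" using x0 by (simp add: powr_add[symmetric])
    finally show ?thesis .
  qed
  have kn: "k \<le> n" using kx x_def x0 by linarith
  have nk: "real (n - k + 1) \<ge> x / 2" using kx kn x_def by (simp add: of_nat_diff)
  define B where "B = b powr ((real k - 1) / 2)"
  have B_le: "B \<le> x powr (1 - \<epsilon>/2)"
  proof -
    have "B \<le> b powr ((1 - \<epsilon>/2) * L)" unfolding B_def
      using kL b1 by (intro powr_mono) (auto simp: field_simps)
    also have "\<dots> = (b powr L) powr (1 - \<epsilon>/2)" by (simp add: powr_powr mult.commute)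
    also have "\<dots> = (x * p) powr (1 - \<epsilon>/2)" by (simp add: Lpow)
    also have "\<dots> \<le> x powr (1 - \<epsilon>/2)" using npx np1 eps by (intro powr_mono2) auto
    finally show ?thesis .
  qed
  define \<rho> where "\<rho> = real k ^ 2 / real (n - k + 1) * B"
  have rho_le: "\<rho> \<le> 2 * c^2 * x powr (4 * \<beta> - \<epsilon>/2)"
  proof -
    have B0: "B \<ge> 0" by (simp add: B_def)
    have "\<rho> \<le> real k ^ 2 / (x / 2) * x powr (1 - \<epsilon>/2)"
      unfolding \<rho>_def using nk B_le B0 x0
      by (intro mult_mono divide_left_mono) auto
    also have "\<dots> = 2 * real k ^ 2 * (x powr (1 - \<epsilon>/2) / x)" using x0 by (simp add: field_simps)
    also have "x powr (1 - \<epsilon>/2) / x = x powr (- \<epsilon>/2)" using x0 by (simp add: powr_diff powr_minus_divide)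
    also have "2 * real k ^ 2 * x powr (- \<epsilon>/2) \<le> 2 * (c * x powr (2 * \<beta>))^2 * x powr (- \<epsilon>/2)"
      using kc by (intro mult_right_mono mult_left_mono power_mono) auto
    also have "\<dots> = 2 * c^2 * x powr (4 * \<beta> - \<epsilon>/2)"
      using x0 by (simp add: power_mult_distrib powr_power powr_add[symmetric] algebra_simps)
    finally show ?thesis .
  qed
  have rho1: "\<rho> \<le> 1"
  proof -
    have "2 * c^2 * x powr (4 * \<beta> - \<epsilon>/2) \<le> x powr (\<epsilon>/2 - 4 * \<beta>) * x powr (4 * \<beta> - \<epsilon>/2)"
      using H5 by (intro mult_right_mono) auto
    also have "\<dots> = 1" using x0 by (simp add: powr_add[symmetric])
    finally show ?thesis using rho_le by simp
  qed
  have rho0: "\<rho> \<ge> 0" by (simp add: \<rho>_def B_def)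
  have del: "delta n k p d \<le> real k * \<rho>^2 / p ^ a"
    using delta_bound[OF p0 p1' k2 kn, of d] rho1 unfolding \<rho>_def B_def b_def q_def a_def by simp
  have pa: "1 / p ^ a \<le> x powr (real a * \<beta>)"
  proof -
    have "1 / p ^ a = (1 / p) ^ a" by (simp add: power_one_over)
    also have "\<dots> \<le> (x powr \<beta>) ^ a" using invp p0 by (intro power_mono) auto
    also have "\<dots> = x powr (real a * \<beta>)" using x0 by (simp add: powr_power)
    finally show ?thesis .
  qed
  have c0: "c > 0" using beta by (simp add: c_def)
  have "delta n k p d \<le> real k * \<rho>^2 * (1 / p ^ a)" using del by simp
  also have "\<dots> \<le> (c * x powr (2 * \<beta>)) * (2 * c^2 * x powr (4 * \<beta> - \<epsilon>/2))^2 * x powr (real a * \<beta>)"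
    using kc rho_le rho0 pa p0 c0
    by (intro mult_mono power_mono) auto
  also have "\<dots> = 4 * c^5 * (x powr (2 * \<beta>) * x powr (8 * \<beta> - \<epsilon>) * x powr (real a * \<beta>))"
    using x0 by (simp add: power_mult_distrib powr_power algebra_simps power2_eq_square powr_add[symmetric] numeral_eq_Suc)
  also have "x powr (2 * \<beta>) * x powr (8 * \<beta> - \<epsilon>) * x powr (real a * \<beta>) = x powr (- \<epsilon>/2)"
  proof -
    have a10: "real a + 10 \<noteq> 0" by (simp add: add_nonneg_pos)
    have h: "(real a + 10) * \<beta> = \<epsilon>/2" unfolding \<beta>_def using a10 by (simp add: field_simps)
    have "2 * \<beta> + (8 * \<beta> - \<epsilon>) + real a * \<beta> = (real a + 10) * \<beta> - \<epsilon>" by (simp add: algebra_simps)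
    then have "2 * \<beta> + (8 * \<beta> - \<epsilon>) + real a * \<beta> = - \<epsilon>/2" using h by simp
    then show ?thesis by (simp add: powr_add[symmetric])
  qed
  also have "4 * c^5 * x powr (- \<epsilon>/2) < 1"
  proof -
    have "4 * c^5 * x powr (- \<epsilon>/2) < x powr (\<epsilon>/2) * x powr (- \<epsilon>/2)"
      using H6 x0 by (intro mult_strict_right_mono) auto
    also have "\<dots> = 1" using x0 by (simp add: powr_add[symmetric])
    finally show ?thesis .
  qed
  finally have "delta n k p d < 1" .
  then have "prob_gnp n p (u_event d n k) > 1/2" using core[OF p0 p1' d kd kn] by simp
  then have "k \<le> u d n p" using u_ge k2 by simp
  then show ?thesis using kL L0 by (simp add: L_def b_def q_def)
qed




lemma ev_powr_gt:
  fixes \<gamma> C :: real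
  assumes g: "\<gamma> > 0"
  shows "eventually (\<lambda>n. C < real n powr \<gamma>) sequentially"
proof -
  define N where "N = nat \<lceil>(\<bar>C\<bar> + 1) powr (1/\<gamma>)\<rceil>"
  show ?thesis unfolding eventually_sequentially
  proof (intro exI[of _ N] allI impI)
    fix n assume n: "N \<le> n"
    have "(\<bar>C\<bar> + 1) powr (1/\<gamma>) \<le> real n"
      using n unfolding N_def by linarith
    then have "((\<bar>C\<bar> + 1) powr (1/\<gamma>)) powr \<gamma> \<le> real n powr \<gamma>"
      using g by (intro powr_mono2) auto
    also have "((\<bar>C\<bar> + 1) powr (1/\<gamma>)) powr \<gamma> = \<bar>C\<bar> + 1"
      using g by (simp add: powr_powr)
    finally show "C < real n powr \<gamma>" by linarith
  qed
qed

theorem theorem24: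
  fixes p :: "nat \<Rightarrow> real"
  assumes p_prob: "\<And>n. 0 \<le> p n \<and> p n \<le> 1"
    and p_large: "\<And>\<alpha>::real. \<alpha> > 0 \<Longrightarrow> filterlim (\<lambda>n. p n * real n powr \<alpha>) at_top sequentially"
    and q_large: "filterlim (\<lambda>n. (1 - p n) * ln (real n)) at_top sequentially"
  shows "\<forall>d::nat. d \<ge> 1 \<longrightarrow> (\<forall>\<epsilon>::real. \<epsilon> > 0 \<longrightarrow> (\<exists>n0. \<forall>n\<ge>n0.
           real (u d n (p n)) \<ge> (2 - \<epsilon>) * log (1 / (1 - p n)) (real n * p n)))"
proof (intro allI impI)
  fix d :: nat and \<epsilon> :: real
  assume d: "d \<ge> 1" and eps: "\<epsilon> > 0"
  define e where "e = min \<epsilon> 1"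
  have e: "0 < e" "e \<le> 1" "e \<le> \<epsilon>" using eps by (auto simp: e_def)
  define a where "a = (d+1) choose 2"
  define \<beta> where "\<beta> = e / (2 * (real a + 10))"
  define c where "c = 3 / \<beta>"
  have beta: "0 < \<beta>" "\<beta> \<le> e / 20" using e by (auto simp: \<beta>_def field_simps)
  have ev1: "eventually (\<lambda>n. p n * real n powr \<beta> \<ge> 1) sequentially"
    using p_large[OF beta(1)] by (simp add: filterlim_at_top)
  have ev2: "eventually (\<lambda>n. (1 - p n) * ln (real n) \<ge> 1) sequentially"
    using q_large by (simp add: filterlim_at_top)
  have ev3: "eventually (\<lambda>n. ln (real n) \<ge> 16 * (real d + 1)^2) sequentially"
  proof -
    have "filterlim (\<lambda>n. ln (real n)) at_top sequentially"
      by (rule filterlim_compose[OF ln_at_top filterlim_real_sequentially])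
    then show ?thesis by (simp add: filterlim_at_top)
  qed
  have ev4: "eventually (\<lambda>n. 2 * c < real n powr (1 - 2 * \<beta>)) sequentially"
    using e beta by (intro ev_powr_gt) auto
  have ev5: "eventually (\<lambda>n. 2 * c^2 < real n powr (e/2 - 4 * \<beta>)) sequentially"
    using e beta by (intro ev_powr_gt) auto
  have ev6: "eventually (\<lambda>n. 4 * c^5 < real n powr (e/2)) sequentially"
    using e by (intro ev_powr_gt) auto
  have "eventually (\<lambda>n. real (u d n (p n)) \<ge> (2 - \<epsilon>) * log (1 / (1 - p n)) (real n * p n)) sequentially"
    using ev1 ev2 ev3 ev4 ev5 ev6
  proof eventually_elim
    case (elim n)
    have "real (u d n (p n)) \<ge> (2 - e) * log (1 / (1 - p n)) (real n * p n) \<and> log (1 / (1 - p n)) (real n * p n) \<ge> 0"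
      using pointwise[of e d "p n" n] e d p_prob[of n] elim
      unfolding a_def[symmetric] \<beta>_def[symmetric] c_def[symmetric] by auto
    moreover have "(2 - \<epsilon>) * log (1 / (1 - p n)) (real n * p n) \<le> (2 - e) * log (1 / (1 - p n)) (real n * p n)"
      using calculation e by (intro mult_right_mono) auto
    ultimately show ?case by linarith
  qed
  then show "\<exists>n0. \<forall>n\<ge>n0. real (u d n (p n)) \<ge> (2 - \<epsilon>) * log (1 / (1 - p n)) (real n * p n)"
    by (simp add: eventually_sequentially)
qed


end
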